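(* Let $N,d_h,d_e\ge1$ and let $\mathcal{M}$ be the space of triples $\mathbf{Z}=(\mathbf{X},\mathbf{H},\mathbf{A})$ with $\mathbf{X}\in\mathbb{R}^{N\times 3}$ zero-centered (rows sum to zero), $\mathbf{H}\in\mathbb{R}^{N\times d_h}$, $\mathbf{A}\in\mathbb{R}^{N\times N\times d_e}$. Let $\mathcal{G}=SO(3)\times S_N$ act by $(R,\pi)\cdot(\mathbf{X},\mathbf{H},\mathbf{A})=(\pi(\mathbf{X})R^\top,\pi(\mathbf{H}),\pi(\mathbf{A}))$, where $\pi$ permutes rows of $\mathbf{X},\mathbf{H}$ and simultaneously rows and columns of $\mathbf{A}$, and let $\lambda$ be the Haar probability measure on $\mathcal{G}$. Let $\mu$ be a $\mathcal{G}$-invariant probability measure on $\mathcal{M}$ under which the stabilizer $\{g:g\cdot\mathbf{Z}=\mathbf{Z}\}$ is trivial almost surely. Let $\Psi:\mathcal{M}\to\mathcal{M}$ be a measurable canonicalization map ($\Psi(\mathbf{Z})$ lies in the orbit of $\mathbf{Z}$ and $\Psi(g\cdot\mathbf{Z})=\Psi(\mathbf{Z})$ for all $g$), defined $\mu$-a.s., with slice $S=\Psi(\mathcal{M})$, and let $\nu:=\Psi_{\#}\mu$. Let $\varepsilon>0$ and let $\hat\mu_{\mathrm{eq}}$ be a $\mathcal{G}$-invariant probability measure on $\mathcal{M}$ (the output of an equivariant baseline model) with $\mathrm{TV}(\hat\mu_{\mathrm{eq}},\mu)<\varepsilon$, and set $\hat\nu_{\mathrm{eq}}:=\Psi_{\#}\hat\mu_{\mathrm{eq}}$.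 Let $\{\hat\nu_\theta\}_\theta$ be a family of probability measures on $S$ such that $$\inf_\theta \mathrm{TV}(\hat\nu_\theta,\nu)\le\mathrm{TV}(\hat\nu_{\mathrm{eq}},\nu).$$ Then there exists $\theta$ such that the Haar-randomized model $$\hat\mu_\theta:=\int_S\Big(\int_{\mathcal{G}}\delta_{g\cdot\mathbf{Z}}\,d\lambda(g)\Big)\,d\hat\nu_\theta(\mathbf{Z})$$ satisfies $\mathrm{TV}(\hat\mu_\theta,\mu)<\varepsilon$.
   Context: $\mathrm{TV}$ denotes total variation distance; $\Psi_{\#}\mu$ denotes the pushforward measure. *)

theory Defs
  imports "HOL-Analysis.Analysis" "HOL-Probability.Probability"
begin

text \<open>Configurations Z = (X, H, A): X has N rows in R^3, H has N rows in R^dh,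
  A is an N x N array of vectors in R^de.  N = CARD('n), dh = CARD('h), de = CARD('e).\<close>
type_synonym ('n, 'h, 'e) config =
  "(real^3^'n) \<times> (real^'h^'n) \<times> (real^'e^'n^'n)"

definition zero_centered :: "('n::finite, 'h::finite, 'e::finite) config set" where
  "zero_centered = {(X, H, A). (\<Sum>i\<in>UNIV. X $ i) = 0}"

definition Mspace :: "('n::finite, 'h::finite, 'e::finite) config measure" where
  "Mspace = restrict_space borel zero_centered"

definition SO3 :: "(real^3^3) set" where
  "SO3 = {R. orthogonal_matrix R \<and> det R = 1}"

definition Gset :: "((real^3^3) \<times> ('n::finite \<Rightarrow> 'n)) set" where
  "Gset = SO3 \<times> {p. bij p}"

definition Gspace :: "((real^3^3) \<times> ('n::finite \<Rightarrow> 'n)) measure" where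
  "Gspace = restrict_space borel SO3 \<Otimes>\<^sub>M count_space {p. bij p}"

definition gmul :: "(real^3^3) \<times> ('n \<Rightarrow> 'n) \<Rightarrow> (real^3^3) \<times> ('n \<Rightarrow> 'n)
    \<Rightarrow> (real^3^3) \<times> ('n \<Rightarrow> 'n)" where
  "gmul g h = (fst g ** fst h, snd g \<circ> snd h)"

text \<open>(R, pi) . (X, H, A) = (pi(X) R^T, pi(H), pi(A)), with (pi Y)_i = Y_(pi^-1 i);
  row i of X R^T is R applied to row i of X.\<close>
definition act :: "(real^3^3) \<times> ('n::finite \<Rightarrow> 'n) \<Rightarrow> ('n, 'h::finite, 'e::finite) config
    \<Rightarrow> ('n, 'h, 'e) config" where
  "act g Z = (case g of (R, p) \<Rightarrow> case Z of (X, H, A) \<Rightarrow>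
      ((\<chi> i. R *v (X $ inv p i)),
       (\<chi> i. H $ inv p i),
       (\<chi> i j. A $ inv p i $ inv p j)))"

definition haar_prob :: "((real^3^3) \<times> ('n::finite \<Rightarrow> 'n)) measure \<Rightarrow> bool" where
  "haar_prob lam \<longleftrightarrow> prob_space lam \<and> sets lam = sets Gspace \<and>
     (\<forall>g\<in>Gset. distr lam Gspace (\<lambda>h. gmul g h) = lam) \<and>
     (\<forall>g\<in>Gset. distr lam Gspace (\<lambda>h. gmul h g) = lam)"

definition G_invariant :: "('n::finite, 'h::finite, 'e::finite) config measure \<Rightarrow> bool" where
  "G_invariant m \<longleftrightarrow> (\<forall>g\<in>(Gset :: ((real^3^3) \<times> ('n \<Rightarrow> 'n)) set).
      distr m Mspace (act g) = m)"

definition tv :: "'a measure \<Rightarrow> 'a measure \<Rightarrow> real" where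
  "tv P Q = (SUP A\<in>sets P. \<bar>measure P A - measure Q A\<bar>)"

definition randomize :: "((real^3^3) \<times> ('n::finite \<Rightarrow> 'n)) measure
    \<Rightarrow> ('n, 'h::finite, 'e::finite) config measure \<Rightarrow> ('n, 'h, 'e) config measure" where
  "randomize lam nu = nu \<bind> (\<lambda>Z. distr lam Mspace (\<lambda>g. act g Z))"

end

theory Submission
  imports Defs
begin

lemma tv_bdd:
  assumes "prob_space P" "prob_space Q"
  shows "bdd_above ((\<lambda>A. \<bar>measure P A - measure Q A\<bar>) ` sets P)"
proof -
  interpret P: prob_space P by fact
  interpret Q: prob_space Q by fact
  show ?thesis
  proof (rule bdd_aboveI[where M=1], clarify)
    fix A assume "A \<in> sets P"
    have "P.prob A \<le> 1" "Q.prob A \<le> 1" "P.prob A \<ge> 0" "Q.prob A \<ge> 0"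
      using P.prob_le_1 Q.prob_le_1 by auto
    thus "\<bar>P.prob A - Q.prob A\<bar> \<le> 1" by linarith
  qed
qed

lemma tv_upper:
  assumes "prob_space P" "prob_space Q" "A \<in> sets P"
  shows "\<bar>measure P A - measure Q A\<bar> \<le> tv P Q"
  unfolding tv_def by (rule cSUP_upper[OF assms(3) tv_bdd[OF assms(1,2)]])

lemma tv_fun_aux:
  assumes P: "prob_space P" and Q: "prob_space Q" and sPQ: "sets P = sets Q"
    and f: "f \<in> borel_measurable P" and f01: "\<And>x. x \<in> space P \<Longrightarrow> 0 \<le> f x \<and> f x \<le> 1"
    and n: "n \<ge> (1::nat)"
  shows "(\<integral>x. f x \<partial>P) - (\<integral>x. f x \<partial>Q) \<le> tv P Q + 1 / n"
proof -
  interpret P: prob_space P by fact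
  interpret Q: prob_space Q by fact
  have spQ: "space Q = space P" using sPQ by (metis sets_eq_imp_space_eq)
  have fQ: "f \<in> borel_measurable Q" using f measurable_cong_sets[OF sPQ refl] by blast
  define B where "B k = {x \<in> space P. real k \<le> real n * f x}" for k :: nat
  have B: "B k \<in> sets P" for k unfolding B_def using f by measurable
  define S where "S x = (\<Sum>k\<in>{1..n}. indicator (B k) x :: real)" for x
  have S_eq: "S x = real (nat \<lfloor>real n * f x\<rfloor>)" if x: "x \<in> space P" for x
  proof -
    have "S x = (\<Sum>k\<in>{1..n}. if real k \<le> real n * f x then 1 else 0)"
      unfolding S_def B_def using x by (intro sum.cong) (auto simp: indicator_def)
    also have "\<dots> = real (card {k\<in>{1..n}. real k \<le> real n * f x})"
    proof -
      have e: "{k\<in>{1..n}. real k \<le> real n * f x} = {1..n} \<inter> {k. real k \<le> real n * f x}" by blast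
      show ?thesis unfolding e by (rule trans[OF sum.If_cases]) simp_all
    qed
    also have "{k\<in>{1..n}. real k \<le> real n * f x} = {1..nat \<lfloor>real n * f x\<rfloor>}"
    proof -
      define m where "m = nat \<lfloor>real n * f x\<rfloor>"
      have "real n * f x \<le> real n" using f01[OF x] by (simp add: mult_left_le)
      hence mn: "m \<le> n" unfolding m_def by linarith
      have iff: "real k \<le> real n * f x \<longleftrightarrow> k \<le> m" for k
        unfolding m_def using f01[OF x] le_floor_iff[of "int k" "real n * f x"] by (auto simp: le_nat_iff)
      have "{k\<in>{1..n}. real k \<le> real n * f x} = {1..m}"
      proof (intro set_eqI)
        fix k show "k \<in> {k\<in>{1..n}. real k \<le> real n * f x} \<longleftrightarrow> k \<in> {1..m}"
          using iff[of k] mn by simp linarith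
      qed
      thus ?thesis unfolding m_def .
    qed
    finally show ?thesis by simp
  qed
  have S_bounds: "real n * f x - 1 \<le> S x \<and> S x \<le> real n * f x" if x: "x \<in> space P" for x
    using S_eq[OF x] f01[OF x] by (simp add: of_nat_nat)
  have Bsp: "B k \<inter> space P = B k" "B k \<inter> space Q = B k" for k
    unfolding B_def using spQ by auto
  have BQ: "B k \<in> sets Q" for k using B sPQ by auto
  have intBP: "integrable P (indicator (B k) :: _ \<Rightarrow> real)" for k
    by (intro integrable_real_indicator B) (simp add: P.emeasure_eq_measure)
  have intBQ: "integrable Q (indicator (B k) :: _ \<Rightarrow> real)" for k
    by (intro integrable_real_indicator BQ) (simp add: Q.emeasure_eq_measure)
  have intSP: "(\<integral>x. S x \<partial>P) = (\<Sum>k\<in>{1..n}. measure P (B k))"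
  proof -
    have "(\<integral>x. (\<Sum>k\<in>{1..n}. indicator (B k) x :: real) \<partial>P) = (\<Sum>k\<in>{1..n}. (\<integral>x. indicator (B k) x \<partial>P))"
      by (rule Bochner_Integration.integral_sum) (rule intBP)
    also have "\<dots> = (\<Sum>k\<in>{1..n}. measure P (B k))" by (rule sum.cong[OF refl]) (simp add: Bsp)
    finally show ?thesis unfolding S_def .
  qed
  have intSQ: "(\<integral>x. S x \<partial>Q) = (\<Sum>k\<in>{1..n}. measure Q (B k))"
  proof -
    have "(\<integral>x. (\<Sum>k\<in>{1..n}. indicator (B k) x :: real) \<partial>Q) = (\<Sum>k\<in>{1..n}. (\<integral>x. indicator (B k) x \<partial>Q))"
      by (rule Bochner_Integration.integral_sum) (rule intBQ)
    also have "\<dots> = (\<Sum>k\<in>{1..n}. measure Q (B k))" by (rule sum.cong[OF refl]) (simp add: Bsp)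
    finally show ?thesis unfolding S_def .
  qed
  have Smeas: "S \<in> borel_measurable P" unfolding S_def using B by measurable
  have intfP: "integrable P f" using f f01
    by (intro P.integrable_const_bound[where B=1]) auto
  have intfQ: "integrable Q f" using fQ f01 spQ
    by (intro Q.integrable_const_bound[where B=1]) auto
  have intSP': "integrable P S" unfolding S_def
    by (intro Bochner_Integration.integrable_sum intBP)
  have "(\<integral>x. real n * f x - 1 \<partial>P) \<le> (\<integral>x. S x \<partial>P)"
    using S_bounds intfP intSP' by (intro integral_mono) auto
  hence 1: "real n * (\<integral>x. f x \<partial>P) - 1 \<le> (\<Sum>k\<in>{1..n}. measure P (B k))"
    using intfP intSP by (simp add: P.prob_space)
  have intSQ': "integrable Q S" unfolding S_def
    by (intro Bochner_Integration.integrable_sum intBQ)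
  have "(\<integral>x. S x \<partial>Q) \<le> (\<integral>x. real n * f x \<partial>Q)"
    using S_bounds intfQ intSQ' spQ by (intro integral_mono) auto
  hence 2: "(\<Sum>k\<in>{1..n}. measure Q (B k)) \<le> real n * (\<integral>x. f x \<partial>Q)"
    using intSQ by simp
  have "(\<Sum>k\<in>{1..n}. measure P (B k)) - (\<Sum>k\<in>{1..n}. measure Q (B k))
        = (\<Sum>k\<in>{1..n}. measure P (B k) - measure Q (B k))" by (simp add: sum_subtractf)
  also have "\<dots> \<le> (\<Sum>k\<in>{1..n}. tv P Q)"
    using tv_upper[OF P Q B] by (intro sum_mono) (auto simp: abs_le_iff)
  also have "\<dots> = real n * tv P Q" by simp
  finally have 3: "(\<Sum>k\<in>{1..n}. measure P (B k)) - (\<Sum>k\<in>{1..n}. measure Q (B k)) \<le> real n * tv P Q" .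
  have "real n * ((\<integral>x. f x \<partial>P) - (\<integral>x. f x \<partial>Q)) \<le> real n * (tv P Q + 1 / n)"
    using 1 2 3 n by (simp add: algebra_simps)
  thus ?thesis using n by simp
qed

lemma tv_fun:
  assumes P: "prob_space P" and Q: "prob_space Q" and sPQ: "sets P = sets Q"
    and f: "f \<in> borel_measurable P" and f01: "\<And>x. x \<in> space P \<Longrightarrow> 0 \<le> f x \<and> f x \<le> 1"
  shows "(\<integral>x. f x \<partial>P) - (\<integral>x. f x \<partial>Q) \<le> tv P Q"
proof (rule ccontr)
  assume "\<not> ?thesis"
  hence "0 < (\<integral>x. f x \<partial>P) - (\<integral>x. f x \<partial>Q) - tv P Q" by simp
  then obtain n where n: "inverse (real (Suc n)) < (\<integral>x. f x \<partial>P) - (\<integral>x. f x \<partial>Q) - tv P Q"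
    using reals_Archimedean by blast
  have "(\<integral>x. f x \<partial>P) - (\<integral>x. f x \<partial>Q) \<le> tv P Q + 1 / real (Suc n)"
    by (rule tv_fun_aux[OF P Q sPQ f f01]) auto
  with n show False by (simp add: field_simps)
qed

lemma tv_fun_abs:
  assumes P: "prob_space P" and Q: "prob_space Q" and sPQ: "sets P = sets Q"
    and f: "f \<in> borel_measurable P" and f01: "\<And>x. x \<in> space P \<Longrightarrow> 0 \<le> f x \<and> f x \<le> 1"
  shows "\<bar>(\<integral>x. f x \<partial>P) - (\<integral>x. f x \<partial>Q)\<bar> \<le> tv P Q"
proof -
  interpret P: prob_space P by fact
  interpret Q: prob_space Q by fact
  have spQ: "space Q = space P" using sPQ by (metis sets_eq_imp_space_eq)
  have fQ: "f \<in> borel_measurable Q" using f measurable_cong_sets[OF sPQ refl] by blast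
  have intfP: "integrable P f" using f f01
    by (intro P.integrable_const_bound[where B=1]) auto
  have intfQ: "integrable Q f" using fQ f01 spQ
    by (intro Q.integrable_const_bound[where B=1]) auto
  have 1: "(\<integral>x. f x \<partial>P) - (\<integral>x. f x \<partial>Q) \<le> tv P Q" by (rule tv_fun[OF P Q sPQ f f01])
  have "(\<integral>x. 1 - f x \<partial>P) - (\<integral>x. 1 - f x \<partial>Q) \<le> tv P Q"
    by (rule tv_fun[OF P Q sPQ]) (use f f01 in \<open>measurable, auto\<close>)
  hence 2: "(\<integral>x. f x \<partial>Q) - (\<integral>x. f x \<partial>P) \<le> tv P Q"
    using intfP intfQ by (simp add: P.prob_space Q.prob_space)
  show ?thesis using 1 2 by linarith
qed

lemma tv_distr:
  assumes P: "prob_space P" and Q: "prob_space Q" and sP: "sets P = sets M" and sQ: "sets Q = sets M"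
    and h: "h \<in> measurable M N"
  shows "tv (distr P N h) (distr Q N h) \<le> tv P Q"
  unfolding tv_def[of "distr P N h"]
proof (rule cSUP_least)
  show "sets (distr P N h) \<noteq> {}" by auto
next
  fix A assume A: "A \<in> sets (distr P N h)"
  have hP: "h \<in> measurable P N" using h measurable_cong_sets[OF sP refl] by blast
  have hQ: "h \<in> measurable Q N" using h measurable_cong_sets[OF sQ refl] by blast
  have spQ: "space Q = space P" using sP sQ by (metis sets_eq_imp_space_eq)
  have A': "A \<in> sets N" using A by simp
  have "measure (distr P N h) A = measure P (h -` A \<inter> space P)" by (rule measure_distr[OF hP A'])
  moreover have "measure (distr Q N h) A = measure Q (h -` A \<inter> space P)"
    using measure_distr[OF hQ A'] spQ by simp
  moreover have "h -` A \<inter> space P \<in> sets P" using hP A' by (rule measurable_sets)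
  ultimately show "\<bar>measure (distr P N h) A - measure (distr Q N h) A\<bar> \<le> tv P Q"
    using tv_upper[OF P Q] by simp
qed

lemma tv_bind:
  assumes P: "prob_space P" and Q: "prob_space Q" and sP: "sets P = sets M" and sQ: "sets Q = sets M"
    and K: "K \<in> measurable M (subprob_algebra N)" and Kp: "\<And>x. x \<in> space M \<Longrightarrow> prob_space (K x)"
  shows "tv (P \<bind> K) (Q \<bind> K) \<le> tv P Q"
  unfolding tv_def[of "P \<bind> K"]
proof (rule cSUP_least)
  interpret P: prob_space P by fact
  interpret Q: prob_space Q by fact
  have spP: "space P = space M" using sP by (metis sets_eq_imp_space_eq)
  have spQ: "space Q = space M" using sQ by (metis sets_eq_imp_space_eq)
  have KP: "K \<in> measurable P (subprob_algebra N)" using K measurable_cong_sets[OF sP refl] by blast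
  have KQ: "K \<in> measurable Q (subprob_algebra N)" using K measurable_cong_sets[OF sQ refl] by blast
  have sets_K: "sets (K x) = sets N" if "x \<in> space M" for x
    using K that by (rule subprob_measurableD(2))
  have sb: "sets (P \<bind> K) = sets N"
    by (rule sets_bind) (use sets_K spP P.not_empty in blast)+
  show "sets (P \<bind> K) \<noteq> {}" using sb by auto
  fix A assume A: "A \<in> sets (P \<bind> K)"
  hence A': "A \<in> sets N" using sb by simp
  have 1: "measure (P \<bind> K) A = (\<integral>x. measure (K x) A \<partial>P)"
    by (rule subprob_space.measure_bind[OF _ KP A']) (rule P.subprob_space_axioms)
  have 2: "measure (Q \<bind> K) A = (\<integral>x. measure (K x) A \<partial>Q)"
    by (rule subprob_space.measure_bind[OF _ KQ A']) (rule Q.subprob_space_axioms)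
  have fm: "(\<lambda>x. measure (K x) A) \<in> borel_measurable P"
    using measurable_compose[OF KP measurable_emeasure_subprob_algebra[OF A']]
    unfolding measure_def by (rule borel_measurable_enn2real)
  have f01: "0 \<le> measure (K x) A \<and> measure (K x) A \<le> 1" if "x \<in> space P" for x
    using Kp[of x] that spP by (auto intro: prob_space.prob_le_1)
  show "\<bar>measure (P \<bind> K) A - measure (Q \<bind> K) A\<bar> \<le> tv P Q"
    unfolding 1 2 by (rule tv_fun_abs[OF P Q _ fm f01]) (use sP sQ in simp)
qed


lemma space_Gspace: "space Gspace = Gset"
  unfolding Gspace_def Gset_def by (simp add: space_pair_measure space_restrict_space)

lemma space_Mspace: "space Mspace = zero_centered"
  unfolding Mspace_def by (simp add: space_restrict_space)

lemma act_alt: "act (R, p) Z =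
   ((\<chi> i. R *v (fst Z $ inv p i)), (\<chi> i. fst (snd Z) $ inv p i),
    (\<chi> i j. snd (snd Z) $ inv p i $ inv p j))"
  by (cases Z) (simp add: act_def)

lemma act_zc:
  assumes "bij p" "Z \<in> zero_centered"
  shows "act (R, p) Z \<in> zero_centered"
proof -
  obtain X H A where Z: "Z = (X, H, A)" by (cases Z) auto
  have X0: "(\<Sum>i\<in>UNIV. X $ i) = 0" using assms(2) Z unfolding zero_centered_def by simp
  have bi: "bij_betw (inv p) UNIV UNIV" using bij_imp_bij_inv[OF assms(1)] unfolding bij_def .
  have "(\<Sum>i\<in>UNIV. X $ inv p i) = (\<Sum>i\<in>UNIV. X $ i)"
    using sum.reindex_bij_betw[OF bi, of "\<lambda>i. X $ i"] by simp
  hence "(\<Sum>i\<in>UNIV. R *v (X $ inv p i)) = 0"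
    using X0 by (simp add: linear_sum[OF matrix_vector_mul_linear, symmetric]
        matrix_vector_mult_0_right)
  thus ?thesis unfolding Z act_def zero_centered_def by simp
qed

lemma act_cont: "continuous_on UNIV (\<lambda>w. act (fst w, p) (snd w))"
  unfolding act_alt matrix_vector_mult_def
  by (intro continuous_intros continuous_on_Pair)

lemma count_bij: "countable {p::'n::finite \<Rightarrow> 'n. bij p}"
  by (rule countable_finite) simp

lemma act_measurable:
  fixes gf :: "'a \<Rightarrow> (real^3^3) \<times> ('n::finite \<Rightarrow> 'n)"
    and zf :: "'a \<Rightarrow> ('n, 'h::finite, 'e::finite) config"
  assumes gf: "gf \<in> measurable M Gspace" and zf: "zf \<in> measurable M Mspace"
  shows "(\<lambda>w. act (gf w) (zf w)) \<in> measurable M Mspace"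
proof -
  have sndm: "(\<lambda>w. snd (gf w)) \<in> measurable M (count_space {p. bij p})"
    using measurable_compose[OF gf[unfolded Gspace_def] measurable_snd] .
  have fstm: "(\<lambda>w. fst (gf w)) \<in> measurable M borel"
    using measurable_compose[OF gf[unfolded Gspace_def] measurable_fst]
    by (simp add: measurable_restrict_space2_iff)
  have zfb: "zf \<in> measurable M borel"
    using zf by (simp add: Mspace_def measurable_restrict_space2_iff)
  have zfs: "zf w \<in> zero_centered" if "w \<in> space M" for w
    using measurable_space[OF zf that] by (simp add: space_Mspace)
  have each: "(\<lambda>w. act (fst (gf w), p) (zf w)) \<in> measurable M Mspace" if p: "p \<in> {p. bij p}" for p
  proof -
    have pm: "(\<lambda>w. (fst (gf w), zf w)) \<in> measurable M borel"
      using measurable_Pair[OF fstm zfb] by (simp add: borel_prod)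
    have "(\<lambda>w. (\<lambda>v. act (fst v, p) (snd v)) (fst (gf w), zf w)) \<in> borel_measurable M"
      by (rule borel_measurable_continuous_on[OF act_cont pm])
    hence "(\<lambda>w. act (fst (gf w), p) (zf w)) \<in> borel_measurable M" by simp
    moreover have "(\<lambda>w. act (fst (gf w), p) (zf w)) \<in> space M \<rightarrow> zero_centered"
      by (intro Pi_I act_zc) (use p zfs in auto)
    ultimately show ?thesis by (simp add: Mspace_def measurable_restrict_space2_iff)
  qed
  have "(\<lambda>w. (\<lambda>p w. act (fst (gf w), p) (zf w)) (snd (gf w)) w) \<in> measurable M Mspace"
    by (rule measurable_compose_countable'[OF each sndm count_bij])
  thus ?thesis by simp
qed


lemma act_comp:
  assumes "bij p" "bij q"
  shows "act (R, p) (act (S, q) Z) = act (gmul (R, p) (S, q)) Z"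
  using assms by (simp add: act_alt gmul_def o_inv_distrib matrix_vector_mul_assoc)

lemma SO3_mul: "R \<in> SO3 \<Longrightarrow> S \<in> SO3 \<Longrightarrow> R ** S \<in> SO3"
  unfolding SO3_def by (auto simp: orthogonal_matrix_mul det_mul)

lemma gmul_meas:
  fixes h :: "(real^3^3) \<times> ('n::finite \<Rightarrow> 'n)"
  assumes h: "h \<in> Gset"
  shows "(\<lambda>g. gmul g h) \<in> measurable Gspace Gspace"
proof -
  obtain S q where hh: "h = (S, q)" "S \<in> SO3" "bij q" using h unfolding Gset_def by auto
  have c: "continuous_on UNIV (\<lambda>R::real^3^3. R ** S)"
    unfolding matrix_matrix_mult_def by (intro continuous_intros)
  have f1: "(\<lambda>g. fst g) \<in> measurable (Gspace :: ((real^3^3) \<times> ('n \<Rightarrow> 'n)) measure) borel"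
    using measurable_fst[of "restrict_space borel SO3" "count_space {p::'n\<Rightarrow>'n. bij p}"]
    unfolding Gspace_def by (simp add: measurable_restrict_space2_iff)
  have m1: "(\<lambda>g. fst g ** S) \<in> measurable (Gspace :: ((real^3^3) \<times> ('n \<Rightarrow> 'n)) measure) (restrict_space borel SO3)"
  proof (subst measurable_restrict_space2_iff, intro conjI)
    show "(\<lambda>g. fst g ** S) \<in> borel_measurable (Gspace :: ((real^3^3) \<times> ('n \<Rightarrow> 'n)) measure)"
      by (rule borel_measurable_continuous_on[OF c f1])
    show "(\<lambda>g. fst g ** S) \<in> space (Gspace :: ((real^3^3) \<times> ('n \<Rightarrow> 'n)) measure) \<rightarrow> SO3"
      using hh(2) by (auto simp: space_Gspace Gset_def intro: SO3_mul)
  qed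
  have m2: "(\<lambda>g. snd g \<circ> q) \<in> measurable (Gspace :: ((real^3^3) \<times> ('n \<Rightarrow> 'n)) measure) (count_space {p. bij p})"
  proof -
    have "(\<lambda>p. p \<circ> q) \<in> measurable (count_space {p. bij p}) (count_space {p. bij p})"
      using hh(3) by (auto simp: measurable_count_space_eq1 intro: bij_comp)
    from measurable_compose[OF measurable_snd this] show ?thesis
      unfolding Gspace_def .
  qed
  have "(\<lambda>g. (fst g ** S, snd g \<circ> q)) \<in> measurable (Gspace :: ((real^3^3) \<times> ('n \<Rightarrow> 'n)) measure) Gspace"
    using measurable_Pair[OF m1 m2] unfolding Gspace_def .
  thus ?thesis unfolding hh gmul_def by simp
qed

lemma act_meas_Z:
  assumes "Z \<in> space Mspace" "sets L = sets Gspace"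
  shows "(\<lambda>g. act g Z) \<in> measurable L Mspace"
proof -
  have "(\<lambda>g. act g Z) \<in> measurable Gspace Mspace"
    by (rule act_measurable[where gf="\<lambda>g. g" and zf="\<lambda>_. Z", OF measurable_ident_sets[OF refl] measurable_const[OF assms(1)]])
  thus ?thesis using measurable_cong_sets[OF assms(2) refl] by blast
qed

lemma act_meas_g:
  fixes g :: "(real^3^3) \<times> ('n::finite \<Rightarrow> 'n)" and L :: "('n, 'h::finite, 'e::finite) config measure"
  assumes "g \<in> Gset" "sets L = sets Mspace"
  shows "act g \<in> measurable L Mspace"
proof -
  have "(\<lambda>Z. act g Z) \<in> measurable Mspace Mspace"
    by (rule act_measurable[where gf="\<lambda>_. g" and zf="\<lambda>Z. Z", OF measurable_const measurable_ident_sets[OF refl]])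
       (simp add: space_Gspace assms(1))
  thus ?thesis using measurable_cong_sets[OF assms(2) refl] by blast
qed

lemma haar_basics:
  assumes "haar_prob lam"
  shows "prob_space lam" "sets lam = sets Gspace" "space lam = Gset"
  using assms unfolding haar_prob_def
  by (auto dest: sets_eq_imp_space_eq simp: space_Gspace)

lemma K_act:
  assumes haar: "haar_prob lam" and h: "h \<in> Gset" and Z: "Z \<in> space Mspace"
  shows "distr lam Mspace (\<lambda>g. act g (act h Z)) = distr lam Mspace (\<lambda>g. act g Z)"
proof -
  note hb = haar_basics[OF haar]
  obtain S q where hh: "h = (S, q)" "S \<in> SO3" "bij q" using h unfolding Gset_def by auto
  have "distr lam Mspace (\<lambda>g. act g (act h Z)) = distr lam Mspace (\<lambda>g. act (gmul g h) Z)"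
  proof (rule distr_cong[OF refl refl])
    fix g assume "g \<in> space lam"
    then obtain R p where "g = (R, p)" "bij p" using hb(3) unfolding Gset_def by auto
    thus "act g (act h Z) = act (gmul g h) Z" using hh act_comp by simp
  qed
  also have "\<dots> = distr (distr lam Gspace (\<lambda>g. gmul g h)) Mspace (\<lambda>g. act g Z)"
  proof -
    have gm: "(\<lambda>g. gmul g h) \<in> measurable lam Gspace"
      using gmul_meas[OF h] measurable_cong_sets[OF hb(2) refl] by blast
    show ?thesis
      by (subst distr_distr[OF act_meas_Z[OF Z refl] gm]) (simp add: comp_def)
  qed
  also have "distr lam Gspace (\<lambda>g. gmul g h) = lam"
    using haar h unfolding haar_prob_def by blast
  finally show ?thesis .
qed

lemma K_meas:
  assumes haar: "haar_prob lam"
  shows "(\<lambda>Z. distr lam Mspace (\<lambda>g. act g Z)) \<in> measurable Mspace (subprob_algebra Mspace)"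
proof -
  note hb = haar_basics[OF haar]
  have jm: "(\<lambda>(Z, g). act g Z) \<in> measurable (Mspace \<Otimes>\<^sub>M lam) Mspace"
  proof -
    have sm: "snd \<in> measurable (Mspace \<Otimes>\<^sub>M lam) Gspace"
      using measurable_snd[of Mspace lam] measurable_cong_sets[OF refl hb(2)] by blast
    have "(\<lambda>w. act (snd w) (fst w)) \<in> measurable (Mspace \<Otimes>\<^sub>M lam) Mspace"
      by (rule act_measurable[OF sm measurable_fst])
    thus ?thesis by (simp add: case_prod_beta')
  qed
  have lm: "(\<lambda>_. lam) \<in> measurable Mspace (subprob_algebra lam)"
    by (rule measurable_const)
       (simp add: space_subprob_algebra prob_space_imp_subprob_space[OF hb(1)])
  show ?thesis by (rule measurable_distr2[OF jm lm])
qed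


lemma bind_inv:
  fixes lam :: "((real^3^3) \<times> ('n::finite \<Rightarrow> 'n)) measure"
    and mu :: "('n, 'h::finite, 'e::finite) config measure"
  assumes haar: "haar_prob lam" and mu_prob: "prob_space mu" and mu_sets: "sets mu = sets Mspace"
    and mu_inv: "G_invariant mu"
  shows "mu \<bind> (\<lambda>Z. distr lam Mspace (\<lambda>g. act g Z)) = mu"
proof -
  note hb = haar_basics[OF haar]
  interpret mu: prob_space mu by fact
  interpret lam: prob_space lam by (rule hb(1))
  interpret pair_sigma_finite mu lam ..
  define K where "K = (\<lambda>Z :: ('n, 'h, 'e) config. distr lam Mspace (\<lambda>g. act g Z))"
  have Km: "K \<in> measurable mu (subprob_algebra (Mspace :: ('n, 'h, 'e) config measure))"
    unfolding K_def using K_meas[OF haar] measurable_cong_sets[OF mu_sets refl] by blast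
  have spmu: "space mu = space Mspace" using mu_sets by (rule sets_eq_imp_space_eq)
  have sb: "sets (mu \<bind> K) = sets Mspace"
    by (rule sets_bind) (auto simp: K_def mu.not_empty)
  show ?thesis unfolding K_def[symmetric]
  proof (rule measure_eqI)
    show "sets (mu \<bind> K) = sets mu" using sb mu_sets by simp
  next
    fix A assume "A \<in> sets (mu \<bind> K)"
    hence A: "A \<in> sets (Mspace :: ('n, 'h, 'e) config measure)" using sb by simp
    have inner: "emeasure (K Z) A = (\<integral>\<^sup>+ g. indicator A (act g Z) \<partial>lam)" if Z: "Z \<in> space mu" for Z
    proof -
      have am: "(\<lambda>g. act g Z) \<in> measurable lam Mspace"
        by (rule act_meas_Z) (use Z spmu hb(2) in auto)
      have "emeasure (K Z) A = (\<integral>\<^sup>+ x. indicator A x \<partial>K Z)"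
        using A by (simp add: K_def)
      also have "\<dots> = (\<integral>\<^sup>+ g. indicator A (act g Z) \<partial>lam)"
        unfolding K_def by (rule nn_integral_distr[OF am]) (use A in simp)
      finally show ?thesis .
    qed
    have jm: "(\<lambda>(Z, g). indicator A (act g Z) :: ennreal) \<in> borel_measurable (mu \<Otimes>\<^sub>M lam)"
    proof -
      have sm: "snd \<in> measurable (mu \<Otimes>\<^sub>M lam) Gspace"
        using measurable_snd[of mu lam] measurable_cong_sets[OF refl hb(2)] by blast
      have fm: "fst \<in> measurable (mu \<Otimes>\<^sub>M lam) Mspace"
        using measurable_fst[of mu lam] measurable_cong_sets[OF refl mu_sets] by blast
      have "(\<lambda>w. act (snd w) (fst w)) \<in> measurable (mu \<Otimes>\<^sub>M lam) Mspace"
        by (rule act_measurable[OF sm fm])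
      hence "(\<lambda>w. indicator A (act (snd w) (fst w)) :: ennreal) \<in> borel_measurable (mu \<Otimes>\<^sub>M lam)"
        using A by measurable
      thus ?thesis by (simp add: case_prod_beta')
    qed
    have inv_g: "(\<integral>\<^sup>+ Z. indicator A (act g Z) \<partial>mu) = emeasure mu A" if g: "g \<in> space lam" for g
    proof -
      have gG: "g \<in> Gset" using g hb(3) by simp
      have "(\<integral>\<^sup>+ Z. indicator A (act g Z) \<partial>mu) = (\<integral>\<^sup>+ x. indicator A x \<partial>distr mu Mspace (act g))"
        by (rule nn_integral_distr[symmetric, OF act_meas_g[OF gG mu_sets]]) (use A in simp)
      also have "distr mu Mspace (act g) = mu" using mu_inv gG unfolding G_invariant_def by blast
      also have "(\<integral>\<^sup>+ x. indicator A x \<partial>mu) = emeasure mu A" using A mu_sets by simp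
      finally show ?thesis .
    qed
    have "emeasure (mu \<bind> K) A = (\<integral>\<^sup>+ Z. emeasure (K Z) A \<partial>mu)"
      by (rule emeasure_bind[OF mu.not_empty Km A])
    also have "\<dots> = (\<integral>\<^sup>+ Z. (\<integral>\<^sup>+ g. indicator A (act g Z) \<partial>lam) \<partial>mu)"
      by (rule nn_integral_cong) (rule inner)
    also have "\<dots> = (\<integral>\<^sup>+ g. (\<integral>\<^sup>+ Z. indicator A (act g Z) \<partial>mu) \<partial>lam)"
      using Fubini'[OF jm] by simp
    also have "\<dots> = (\<integral>\<^sup>+ g. emeasure mu A \<partial>lam)"
      by (rule nn_integral_cong) (rule inv_g)
    also have "\<dots> = emeasure mu A" by (simp add: lam.emeasure_space_1)
    finally show "emeasure (mu \<bind> K) A = emeasure mu A" .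
  qed
qed

theorem mainTheorem3:
  fixes lam :: "((real^3^3) \<times> ('n::finite \<Rightarrow> 'n)) measure"
    and mu mu_eq :: "('n, 'h::finite, 'e::finite) config measure"
    and Psi :: "('n, 'h, 'e) config \<Rightarrow> ('n, 'h, 'e) config"
    and D :: "('n, 'h, 'e) config set"
    and nu_hat :: "'p \<Rightarrow> ('n, 'h, 'e) config measure"
    and \<epsilon> :: real
  assumes haar: "haar_prob lam"
    and mu_prob: "prob_space mu" and mu_sets: "sets mu = sets Mspace"
    and mu_inv: "G_invariant mu"
    and stab: "AE Z in mu. \<forall>g\<in>Gset. act g Z = Z \<longrightarrow> g = (mat 1, id)"
    and Psi_meas: "Psi \<in> measurable Mspace Mspace"
    and D_sets: "D \<in> sets Mspace" and D_full: "emeasure mu D = 1"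
    and Psi_orbit: "\<forall>Z\<in>D. \<exists>g\<in>Gset. Psi Z = act g Z"
    and Psi_inv: "\<forall>Z\<in>D. \<forall>g\<in>Gset. Psi (act g Z) = Psi Z"
    and eps: "\<epsilon> > 0"
    and eq_prob: "prob_space mu_eq" and eq_sets: "sets mu_eq = sets Mspace"
    and eq_inv: "G_invariant mu_eq"
    and eq_D: "emeasure mu_eq D = 1"
    and eq_tv: "tv mu_eq mu < \<epsilon>"
    and fam: "\<forall>\<theta>. prob_space (nu_hat \<theta>) \<and> sets (nu_hat \<theta>) = sets Mspace
                  \<and> (AE Z in nu_hat \<theta>. Z \<in> Psi ` D)"
    and inf_le: "(INF \<theta>. tv (nu_hat \<theta>) (distr mu Mspace Psi))
                   \<le> tv (distr mu_eq Mspace Psi) (distr mu Mspace Psi)"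
  shows "\<exists>\<theta>. tv (randomize lam (nu_hat \<theta>)) mu < \<epsilon>"
proof -
  note hb = haar_basics[OF haar]
  interpret mu: prob_space mu by fact
  define K where "K = (\<lambda>Z :: ('n, 'h, 'e) config. distr lam Mspace (\<lambda>g. act g Z))"
  have Km: "K \<in> measurable Mspace (subprob_algebra (Mspace :: ('n, 'h, 'e) config measure))"
    unfolding K_def by (rule K_meas[OF haar])
  have Kp: "prob_space (K Z)" if "Z \<in> space Mspace" for Z
    unfolding K_def by (rule prob_space.prob_space_distr[OF hb(1) act_meas_Z[OF that hb(2)]])
  have spmu: "space mu = space Mspace" using mu_sets by (rule sets_eq_imp_space_eq)
  have Psi_mu: "Psi \<in> measurable mu Mspace"
    using Psi_meas measurable_cong_sets[OF mu_sets refl] by blast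
  define nu where "nu = distr mu Mspace Psi"
  have nu_prob: "prob_space nu" unfolding nu_def by (rule mu.prob_space_distr[OF Psi_mu])
  have nu_sets: "sets nu = sets Mspace" unfolding nu_def by simp
  have AED: "AE Z in mu. Z \<in> D"
  proof (rule prob_space.AE_prob_1[OF mu_prob])
    show "measure mu D = 1" using D_full by (simp add: measure_def)
  qed
  have rand_nu: "randomize lam nu = mu"
  proof -
    have "randomize lam nu = nu \<bind> K" unfolding randomize_def K_def ..
    also have "\<dots> = mu \<bind> (\<lambda>Z. K (Psi Z))"
      unfolding nu_def by (rule bind_distr[OF Psi_mu Km mu.not_empty])
    also have "\<dots> = mu \<bind> K"
    proof (rule bind_cong_AE[OF refl])
      show "(\<lambda>Z. K (Psi Z)) \<in> measurable mu (subprob_algebra Mspace)"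
        using measurable_compose[OF Psi_mu Km] by (simp add: comp_def)
      show "K \<in> measurable mu (subprob_algebra Mspace)"
        using Km measurable_cong_sets[OF mu_sets refl] by blast
      show "AE Z in mu. K (Psi Z) = K Z"
        using AED
      proof (rule AE_mp, intro AE_I2 impI)
        fix Z assume "Z \<in> D"
        moreover from this obtain h where "h \<in> Gset" "Psi Z = act h Z" using Psi_orbit by blast
        moreover have "Z \<in> space Mspace" using D_sets \<open>Z \<in> D\<close> sets.sets_into_space by blast
        ultimately show "K (Psi Z) = K Z" unfolding K_def using K_act[OF haar] by simp
      qed
    qed
    also have "\<dots> = mu" unfolding K_def by (rule bind_inv[OF haar mu_prob mu_sets mu_inv])
    finally show ?thesis .
  qed
  have "tv (distr mu_eq Mspace Psi) nu \<le> tv mu_eq mu"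
    unfolding nu_def by (rule tv_distr[OF eq_prob mu_prob eq_sets mu_sets Psi_meas])
  hence "(INF \<theta>. tv (nu_hat \<theta>) nu) < \<epsilon>" using inf_le eq_tv unfolding nu_def by linarith
  then obtain \<theta> where th: "tv (nu_hat \<theta>) nu < \<epsilon>"
    using cInf_lessD[of "range (\<lambda>\<theta>. tv (nu_hat \<theta>) nu)" \<epsilon>] by auto
  have "tv (randomize lam (nu_hat \<theta>)) mu = tv (nu_hat \<theta> \<bind> K) (nu \<bind> K)"
    using rand_nu unfolding randomize_def K_def by simp
  also have "\<dots> \<le> tv (nu_hat \<theta>) nu"
    by (rule tv_bind[OF _ nu_prob _ nu_sets Km Kp]) (use fam in auto)
  finally show ?thesis using th by (intro exI[of _ \<theta>]) linarith
qed

end
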